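(* Let $q$ be a prime power and $n$ a positive integer. Every sesquilinear form of $\mathbb F_{q^{2n}}/\mathbb F_{q^2}$ can be written as $\sigma_L$ for some $q^2$-linear polynomial $L$ over $\mathbb F_{q^{2n}}$. Moreover, for a $q^2$-linear polynomial $L$ over $\mathbb F_{q^{2n}}$, the following conditions are equivalent: (1) $\sigma_L$ is alternating; (2) $\sigma_L$ is the zero form; (3) $L(x)\equiv 0 \pmod{x^{q^{2n}}-x}$.
   Context: $\mathbb F_{q^{2n}}$ is regarded as an $n$-dimensional vector space over $\mathbb F_{q^2}$, and $\pi$ denotes the automorphism $x\mapsto x^q$ of $\mathbb F_{q^2}$. A sesquilinear form of $\mathbb F_{q^{2n}}/\mathbb F_{q^2}$ is a map $\sigma:\mathbb F_{q^{2n}}\times\mathbb F_{q^{2n}}\to\mathbb F_{q^2}$ such that for each fixed $v$, $\sigma(\cdot,v)$ is $\mathbb F_{q^2}$-linear and $\sigma(v,\cdot)$ is additive with $\sigma(v,cw)=c^q\sigma(v,w)$ for $c\in\mathbb F_{q^2}$. It is alternating if $\sigma(v,v)=0$ for all $v$. A $q^2$-linear polynomial over $\mathbb F_{q^{2n}}$ is a polynomial $\sum_i a_ix^{q^{2i}}$ with $a_i\in\mathbb F_{q^{2n}}$. $\mathrm{Tr}$ denotes the trace map $\mathbb F_{q^{2n}}\to\mathbb F_{q^2}$, and $\sigma_L(u,v)=\mathrm{Tr}(uL(v^q))$ for $u,v\in\mathbb F_{q^{2n}}$. *)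

theory Defs
  imports "HOL-Computational_Algebra.Polynomial"
begin

text \<open>The ambient field F_{q^{2n}} is a finite field type 'a with CARD('a) = q^(2n).
  The subfield F_{q^2} is the set of elements fixed by x \<mapsto> x^(q^2).\<close>

definition subF :: "nat \<Rightarrow> 'a::{finite,field} set" where
  "subF q = {x. x ^ (q^2) = x}"

definition trF :: "nat \<Rightarrow> nat \<Rightarrow> 'a::{finite,field} \<Rightarrow> 'a" where
  "trF q n x = (\<Sum>i<n. x ^ (q ^ (2*i)))"

definition sesquilinear :: "nat \<Rightarrow> ('a::{finite,field} \<Rightarrow> 'a \<Rightarrow> 'a) \<Rightarrow> bool" where
  "sesquilinear q \<sigma> \<longleftrightarrow>
     (\<forall>u v. \<sigma> u v \<in> subF q) \<and>
     (\<forall>u u' v. \<sigma> (u + u') v = \<sigma> u v + \<sigma> u' v) \<and>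
     (\<forall>c\<in>subF q. \<forall>u v. \<sigma> (c * u) v = c * \<sigma> u v) \<and>
     (\<forall>u v v'. \<sigma> u (v + v') = \<sigma> u v + \<sigma> u v') \<and>
     (\<forall>c\<in>subF q. \<forall>u v. \<sigma> u (c * v) = c ^ q * \<sigma> u v)"

definition alternating :: "('a \<Rightarrow> 'a \<Rightarrow> 'b::zero) \<Rightarrow> bool" where
  "alternating \<sigma> \<longleftrightarrow> (\<forall>v. \<sigma> v v = 0)"

definition q2_linear :: "nat \<Rightarrow> 'a::{finite,field} poly \<Rightarrow> bool" where
  "q2_linear q L \<longleftrightarrow> (\<forall>k. coeff L k \<noteq> 0 \<longrightarrow> (\<exists>i. k = q ^ (2*i)))"

definition sigmaL :: "nat \<Rightarrow> nat \<Rightarrow> 'a::{finite,field} poly \<Rightarrow> 'a \<Rightarrow> 'a \<Rightarrow> 'a" where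
  "sigmaL q n L u v = trF q n (u * poly L (v ^ q))"

end

theory Submission imports Defs "HOL-Algebra.Coset" "HOL-Library.FuncSet" begin

lemma of_nat_mod_CHAR: "(of_nat (m mod CHAR('a)) :: 'a::comm_ring_1) = of_nat m"
proof -
  have "(of_nat m :: 'a) = of_nat (m mod CHAR('a)) + of_nat (CHAR('a) * (m div CHAR('a)))"
    by (metis mod_mult_div_eq of_nat_add)
  also have "(of_nat (CHAR('a) * (m div CHAR('a))) :: 'a) = 0" by simp
  finally show ?thesis by simp
qed

lemma my_CHAR_dvd_CARD: "CHAR('a::{finite,comm_ring_1}) dvd card (UNIV :: 'a set)"
proof -
  have cpos: "CHAR('a) > 0" by (rule finite_imp_CHAR_pos) simp
  define G where "G = \<lparr> carrier = (UNIV :: 'a set), monoid.mult = (+), one = (0 :: 'a) \<rparr>"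
  define H where "H = (of_nat ` {..<CHAR('a)} :: 'a set)"
  interpret group G
  proof (rule groupI)
    fix x assume x: "x \<in> carrier G"
    show "\<exists>y\<in>carrier G. y \<otimes>\<^bsub>G\<^esub> x = \<one>\<^bsub>G\<^esub>"
      by (intro bexI[of _ "-x"]) (auto simp: G_def)
  qed (auto simp: G_def add_ac)
  have sg: "subgroup H G"
  proof (rule subgroup.intro)
    show "\<one>\<^bsub>G\<^esub> \<in> H"
      using cpos unfolding G_def H_def by force
  next
    fix x y :: 'a
    assume "x \<in> H" "y \<in> H"
    then obtain x' y' where [simp]: "x = of_nat x'" "y = of_nat y'"
      by (auto simp: H_def)
    have "x + y = of_nat ((x' + y') mod CHAR('a))"
      by (simp add: of_nat_mod_CHAR)
    moreover have "(x' + y') mod CHAR('a) < CHAR('a)"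
      using cpos by simp
    ultimately show "x \<otimes>\<^bsub>G\<^esub> y \<in> H"
      by (auto simp: H_def G_def intro!: imageI)
  next
    fix x :: 'a
    assume x: "x \<in> H"
    then obtain x' where [simp]: "x = of_nat x'" and x': "x' < CHAR('a)"
      by (auto simp: H_def)
    have "x + of_nat (CHAR('a) - x') = of_nat (CHAR('a))"
      using x' by (simp flip: of_nat_add)
    hence "x + of_nat ((CHAR('a) - x') mod CHAR('a)) = 0"
      by (simp add: of_nat_mod_CHAR)
    moreover from this have "inv\<^bsub>G\<^esub> x = of_nat ((CHAR('a) - x') mod CHAR('a))"
      by (intro inv_equality) (auto simp: G_def add_ac)
    moreover have "of_nat ((CHAR('a) - x') mod CHAR('a)) \<in> H"
      unfolding H_def using cpos by (intro imageI) auto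
    ultimately show "inv\<^bsub>G\<^esub> x \<in> H" by force
  qed (auto simp: G_def H_def)
  have "card H dvd card (rcosets\<^bsub>G\<^esub> H) * card H"
    by simp
  also have "card (rcosets\<^bsub>G\<^esub> H) * card H = Coset.order G"
    by (rule lagrange_finite[OF _ sg]) (auto simp: G_def)
  finally have "card H dvd card (UNIV :: 'a set)"
    by (simp add: Coset.order_def G_def)
  also have "card H = card {..<CHAR('a)}"
    unfolding H_def
  proof (intro card_image inj_onI)
    fix x y assume xy: "x \<in> {..<CHAR('a)}" "y \<in> {..<CHAR('a)}" "(of_nat x :: 'a) = of_nat y"
    show "x = y"
    proof (rule ccontr)
      assume "x \<noteq> y"
      then consider "x < y" | "y < x" by linarith
      thus False
      proof cases
        case 1
        hence "CHAR('a) dvd (y - x)" using xy of_nat_eq_iff_char_dvd by blast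
        with 1 xy show False using dvd_imp_le[of "CHAR('a)" "y - x"] by auto
      next
        case 2
        hence "CHAR('a) dvd (x - y)" using xy of_nat_eq_iff_char_dvd by metis
        with 2 xy show False using dvd_imp_le[of "CHAR('a)" "x - y"] by auto
      qed
    qed
  qed
  finally show "CHAR('a) dvd card (UNIV :: 'a set)"
    by simp
qed

lemma CHAR_is_p:
  fixes q n :: nat
  assumes "\<exists>p k. prime p \<and> k > 0 \<and> q = p ^ k" and "n > 0"
    and "card (UNIV :: 'a::{finite,field} set) = q ^ (2*n)"
  shows "\<exists>k>0. q = CHAR('a) ^ k"
proof -
  obtain p k where pk: "prime p" "k > 0" "q = p ^ k" using assms(1) by blast
  have cp: "prime CHAR('a)"
    by (rule prime_CHAR_semidom) (rule finite_imp_CHAR_pos, simp)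
  have "CHAR('a) dvd p ^ (k * (2*n))"
    using my_CHAR_dvd_CARD[where 'a='a] assms(3) pk by (simp add: power_mult)
  hence "CHAR('a) dvd p" using cp prime_dvd_power by blast
  hence "CHAR('a) = p" using cp pk(1) by (simp add: primes_dvd_imp_eq)
  thus ?thesis using pk by blast
qed

context
  fixes q n k :: nat and ty :: "'a::{finite,field} itself"
  assumes qk: "q = CHAR('a) ^ k" and kpos: "k > 0" and npos: "n > 0"
    and cardF: "card (UNIV :: 'a set) = q ^ (2*n)"
begin

lemma charp: "prime CHAR('a)"
  by (rule prime_CHAR_semidom) (rule finite_imp_CHAR_pos, simp)

lemma q_ge2: "q \<ge> 2"
proof -
  have c2: "CHAR('a) \<ge> 2" using charp prime_ge_2_nat by blast
  have "CHAR('a) ^ 1 \<le> CHAR('a) ^ k" using kpos c2 by (intro power_increasing) auto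
  thus ?thesis using qk c2 by simp
qed

lemma frob: "((x::'a) + y) ^ (q ^ j) = x ^ (q ^ j) + y ^ (q ^ j)"
  by (rule freshmans_dream'[OF charp, of _ "k*j"]) (simp add: qk power_mult)

lemma frob_sum: "(sum (f :: 'b \<Rightarrow> 'a) A) ^ (q ^ j) = (\<Sum>i\<in>A. f i ^ (q ^ j))"
  by (rule freshmans_dream_sum'[OF charp, of _ "k*j"]) (simp add: qk power_mult)

lemma frob_diff: "((x::'a) - y) ^ (q ^ j) = x ^ (q ^ j) - y ^ (q ^ j)"
  using frob[of "x - y" y j] by (simp add: algebra_simps)

lemma pow_card: "(x::'a) ^ card (UNIV :: 'a set) = x"
proof (cases "x = 0")
  case False
  have "x * (\<Prod>y\<in>UNIV-{0}. x * y) = x * x ^ (card (UNIV :: 'a set) - 1) * \<Prod>(UNIV-{0})"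
    by (simp add: prod.distrib mult_ac)
  also have "x * x ^ (card (UNIV :: 'a set) - 1) = x ^ Suc (card (UNIV :: 'a set) - 1)"
    by (subst power_Suc) auto
  also have "Suc (card (UNIV :: 'a set) - 1) = card (UNIV :: 'a set)"
    using finite_UNIV_card_ge_0[where ?'a = 'a] by simp
  also have "(\<Prod>y\<in>UNIV-{0}. x * y) = (\<Prod>y\<in>UNIV-{0}. y)"
    by (rule prod.reindex_bij_witness[of _ "\<lambda>y. y / x" "\<lambda>y. x * y"]) (use False in auto)
  finally show ?thesis
    by simp
qed (use finite_UNIV_card_ge_0[where ?'a = 'a] in auto)

lemma pow_Q: "(x::'a) ^ (q ^ (2*n)) = x"
  using pow_card cardF by simp


lemma powq_iter: "((x::'a) ^ (q^a)) ^ (q^b) = x ^ (q^(a+b))"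
  by (simp add: power_mult[symmetric] power_add)

lemma K_iff: "c \<in> subF q \<longleftrightarrow> (c::'a) ^ (q^2) = c"
  by (simp add: subF_def)

lemma K_add: "a \<in> subF q \<Longrightarrow> b \<in> subF q \<Longrightarrow> (a::'a) + b \<in> subF q"
  using frob[of a b 2] by (simp add: subF_def)
lemma K_diff: "a \<in> subF q \<Longrightarrow> b \<in> subF q \<Longrightarrow> (a::'a) - b \<in> subF q"
  using frob_diff[of a b 2] by (simp add: subF_def)
lemma K_mult: "a \<in> subF q \<Longrightarrow> b \<in> subF q \<Longrightarrow> (a::'a) * b \<in> subF q"
  by (simp add: subF_def power_mult_distrib)
lemma K_divide: "a \<in> subF q \<Longrightarrow> b \<in> subF q \<Longrightarrow> (a::'a) / b \<in> subF q"
  by (simp add: subF_def power_divide)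
lemma K_0: "(0::'a) \<in> subF q" using q_ge2 by (simp add: subF_def)
lemma K_powq: assumes "c \<in> subF q" shows "(c::'a) ^ q \<in> subF q"
proof -
  have "(c^q)^(q^2) = c^(q*q^2)" by (rule power_mult[symmetric])
  also have "q*q^2 = q^2*q" by (rule mult.commute)
  also have "c^(q^2*q) = (c^(q^2))^q" by (rule power_mult)
  also have "c^(q^2) = c" using assms by (simp add: subF_def)
  finally show ?thesis by (simp add: subF_def)
qed

lemma K_pow_iter: "c \<in> subF q \<Longrightarrow> (c::'a) ^ (q^(2*i)) = c"
proof (induction i)
  case 0 then show ?case by simp
next
  case (Suc i)
  have "c ^ (q^(2*Suc i)) = (c ^ (q^(2*i))) ^ (q^2)"
    by (simp add: power_mult[symmetric] power_add[symmetric])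
  also have "\<dots> = c" using Suc by (simp add: subF_def)
  finally show ?case .
qed

lemma trF_add: "trF q n ((x::'a) + y) = trF q n x + trF q n y"
  by (simp add: trF_def frob sum.distrib power_mult[symmetric])

lemma trF_diff: "trF q n ((x::'a) - y) = trF q n x - trF q n y"
  by (simp add: trF_def frob_diff sum_subtractf)

lemma trF_0: "trF q n (0::'a) = 0"
  using q_ge2 by (simp add: trF_def power_0_left)

lemma trF_scale: "c \<in> subF q \<Longrightarrow> trF q n ((c::'a) * x) = c * trF q n x"
  by (simp add: trF_def power_mult_distrib K_pow_iter sum_distrib_left)

lemma trF_K: "trF q n (x::'a) \<in> subF q"
proof -
  have "(trF q n x) ^ (q^2) = (\<Sum>i<n. x ^ (q^(2*Suc i)))"
    unfolding trF_def frob_sum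
    by (intro sum.cong refl) (simp add: power_mult[symmetric] power_add[symmetric])
  also have "\<dots> = trF q n x"
  proof -
    have "(\<Sum>i<n. x ^ (q^(2*Suc i))) + x ^ (q^(2*0)) = (\<Sum>i<Suc n. x ^ (q^(2*i)))"
      by (subst sum.lessThan_Suc_shift) simp
    also have "\<dots> = (\<Sum>i<n. x ^ (q^(2*i))) + x ^ (q^(2*0))"
      using pow_Q[of x] by simp
    finally show ?thesis unfolding trF_def by simp
  qed
  finally show ?thesis by (simp add: subF_def)
qed

lemma Q_ge2: "q ^ (2*n) \<ge> (2::nat)"
proof -
  have "q ^ (2*n) \<ge> q ^ 1" using q_ge2 npos by (intro power_increasing) auto
  thus ?thesis using q_ge2 by simp
qed

lemma trF_nonzero: "\<exists>a::'a. trF q n a \<noteq> 0"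
proof (rule ccontr)
  assume H: "\<not> ?thesis"
  define P :: "'a poly" where "P = (\<Sum>i<n. monom 1 (q^(2*i)))"
  have polyP: "poly P x = trF q n x" for x
    by (simp add: P_def trF_def poly_sum poly_monom)
  have "coeff P 1 = (\<Sum>i<n. if q^(2*i) = 1 then 1 else 0)"
    by (simp add: P_def coeff_sum coeff_monom eq_commute)
  also have "\<dots> = (\<Sum>i<n. if i = 0 then 1 else 0)"
    using q_ge2 by (intro sum.cong refl) (simp add: power_eq_1_iff)
  also have "\<dots> = 1" using npos by simp
  finally have "coeff P 1 = 1" .
  hence P0: "P \<noteq> 0" by auto
  have "degree P \<le> q^(2*(n-1))"
    unfolding P_def
  proof (rule degree_sum_le)
    fix i assume "i \<in> {..<n}"
    hence "q^(2*i) \<le> q^(2*(n-1))" using q_ge2 by (intro power_increasing) auto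
    thus "degree (monom (1::'a) (q^(2*i))) \<le> q^(2*(n-1))" by (simp add: degree_monom_eq)
  qed simp
  also have "\<dots> < q^(2*n)" using q_ge2 npos by (intro power_strict_increasing) auto
  finally have dP: "degree P < card (UNIV :: 'a set)" using cardF by simp
  have "{x. poly P x = 0} = UNIV" using H polyP by auto
  with card_poly_roots_bound[OF P0] dP show False by simp
qed

definition DQ :: "'a poly" where "DQ = Polynomial.monom 1 (q^(2*n)) - Polynomial.monom 1 1"

lemma poly_DQ: "poly DQ x = 0"
  using pow_Q[of x] by (simp add: DQ_def poly_monom)

lemma degree_DQ: "degree DQ = q^(2*n)"
proof -
  have "DQ = monom 1 (q^(2*n)) + (- monom 1 1)" by (simp add: DQ_def)
  also have "degree \<dots> = degree (monom (1::'a) (q^(2*n)))"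
    using Q_ge2 by (intro degree_add_eq_left) (simp add: degree_monom_eq)
  finally show ?thesis by (simp add: degree_monom_eq)
qed

lemma DQ_nz: "DQ \<noteq> 0"
proof
  assume "DQ = 0"
  hence "q^(2*n) = (0::nat)" using degree_DQ by simp
  with Q_ge2 show False by simp
qed

lemma all_zero_dvd: assumes "\<And>x. poly L x = (0::'a)" shows "DQ dvd L"
proof -
  define r where "r = L mod DQ"
  have "L = DQ * (L div DQ) + r" unfolding r_def by simp
  hence "poly r x = 0" for x
    using assms[of x] poly_DQ[of x] by (metis add_0 mult_zero_left poly_add poly_mult)
  hence R: "{x. poly r x = 0} = UNIV" by auto
  have "r = 0"
  proof (rule ccontr)
    assume "r \<noteq> 0"
    hence "degree r < q^(2*n)" using degree_mod_less'[OF DQ_nz] degree_DQ r_def by auto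
    with card_poly_roots_bound[OF \<open>r \<noteq> 0\<close>] R cardF show False by simp
  qed
  thus ?thesis unfolding r_def by (simp add: dvd_eq_mod_eq_0)
qed

lemma dvd_all_zero: assumes "DQ dvd L" shows "poly L (x::'a) = 0"
  using assms poly_DQ by (auto elim!: dvdE)

lemma sigma_zero_iff: "sigmaL q n L = (\<lambda>u v. 0) \<longleftrightarrow> (\<forall>x::'a. poly L x = 0)"
proof
  assume Z: "\<forall>x. poly L x = 0"
  show "sigmaL q n L = (\<lambda>u v. 0)" by (intro ext) (simp add: sigmaL_def Z trF_0)
next
  assume S: "sigmaL q n L = (\<lambda>u v. 0)"
  show "\<forall>x. poly L x = 0"
  proof
    fix w :: 'a
    obtain a :: 'a where a: "trF q n a \<noteq> 0" using trF_nonzero by blast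
    define v where "v = w ^ (q^(2*n-1))"
    have "v ^ q = w ^ (q^(2*n-1) * q)" by (simp add: v_def power_mult)
    also have "q^(2*n-1) * q = q^(2*n)" using npos by (simp add: power_Suc2[symmetric])
    finally have vq: "v ^ q = w" using pow_Q by simp
    show "poly L w = 0"
    proof (rule ccontr)
      assume nz: "poly L w \<noteq> 0"
      have "sigmaL q n L (a / poly L w) v = trF q n a"
        using nz by (simp add: sigmaL_def vq)
      with S a show False by simp
    qed
  qed
qed

lemma sigma_zero_iff_dvd: "sigmaL q n L = (\<lambda>u v. 0) \<longleftrightarrow> DQ dvd (L :: 'a poly)"
proof
  assume "sigmaL q n L = (\<lambda>u v. 0)"
  hence Z: "\<forall>x. poly L x = 0" by (simp add: sigma_zero_iff)
  show "DQ dvd L" by (rule all_zero_dvd) (use Z in simp)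
next
  assume "DQ dvd L"
  hence "\<forall>x. poly L x = 0" using dvd_all_zero by blast
  thus "sigmaL q n L = (\<lambda>u v. 0)" by (simp add: sigma_zero_iff)
qed

lemma sigma_zero_iff_dvd': "sigmaL q n L = (\<lambda>u v. 0) \<longleftrightarrow> (monom 1 (q ^ (2*n)) - monom 1 1) dvd (L :: 'a poly)"
  unfolding sigma_zero_iff_dvd DQ_def by (rule refl)

lemma q2_term_add:
  assumes "q2_linear q L"
  shows "coeff L i * ((x::'a) + y)^i = coeff L i * x^i + coeff L i * y^i"
proof (cases "coeff L i = 0")
  case False
  then obtain j where "i = q^(2*j)" using assms by (auto simp: q2_linear_def)
  thus ?thesis by (simp add: frob distrib_left)
qed simp

lemma q2_term_scale:
  assumes "q2_linear q L" "c \<in> subF q"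
  shows "coeff L i * ((c::'a) * x)^i = c * (coeff L i * x^i)"
proof (cases "coeff L i = 0")
  case False
  then obtain j where "i = q^(2*j)" using assms by (auto simp: q2_linear_def)
  moreover have "c ^ (q^(2*j)) = c" by (rule K_pow_iter[OF assms(2)])
  ultimately show ?thesis by (simp add: power_mult_distrib mult_ac)
qed simp

lemma poly_add_L: "q2_linear q L \<Longrightarrow> poly L ((x::'a) + y) = poly L x + poly L y"
  by (simp add: poly_altdef q2_term_add sum.distrib)

lemma poly_scale_L: "q2_linear q L \<Longrightarrow> c \<in> subF q \<Longrightarrow> poly L ((c::'a) * x) = c * poly L x"
  by (simp add: poly_altdef q2_term_scale sum_distrib_left)

lemma sesq_sigmaL:
  assumes L: "q2_linear q (L :: 'a poly)"
  shows "sesquilinear q (sigmaL q n L)"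
  unfolding sesquilinear_def
proof (intro conjI allI ballI)
  fix u v :: 'a
  show "sigmaL q n L u v \<in> subF q" by (simp add: sigmaL_def trF_K)
next
  fix u u' v :: 'a
  show "sigmaL q n L (u + u') v = sigmaL q n L u v + sigmaL q n L u' v"
    by (simp add: sigmaL_def distrib_right trF_add)
next
  fix c u v :: 'a assume c: "c \<in> subF q"
  show "sigmaL q n L (c * u) v = c * sigmaL q n L u v"
    using c by (simp add: sigmaL_def mult.assoc trF_scale)
next
  fix u v v' :: 'a
  have "(v + v') ^ q = v ^ q + v' ^ q" using frob[of v v' 1] by simp
  thus "sigmaL q n L u (v + v') = sigmaL q n L u v + sigmaL q n L u v'"
    by (simp add: sigmaL_def poly_add_L[OF L] distrib_left trF_add)
next
  fix c u v :: 'a assume c: "c \<in> subF q"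
  have e: "poly L (c^q * v^q) = c^q * poly L (v^q)" by (rule poly_scale_L[OF L K_powq[OF c]])
  have "u * poly L ((c * v) ^ q) = c ^ q * (u * poly L (v ^ q))"
    by (simp only: power_mult_distrib e mult.left_commute)
  hence "trF q n (u * poly L ((c * v) ^ q)) = c ^ q * trF q n (u * poly L (v ^ q))"
    by (simp only: trF_scale[OF K_powq[OF c]])
  thus "sigmaL q n L u (c * v) = c ^ q * sigmaL q n L u v"
    by (simp only: sigmaL_def)
qed

definition Dm :: "nat \<Rightarrow> 'a poly" where "Dm m = monom 1 m - monom 1 1"

lemma poly_Dm: "poly (Dm m) x = (x::'a) ^ m - x"
  by (simp add: Dm_def poly_monom)

lemma degree_Dm: assumes "m \<ge> 2" shows "degree (Dm m :: 'a poly) = m"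
proof -
  have "Dm m = monom 1 m + (- monom (1::'a) 1)" by (simp add: Dm_def)
  also have "degree \<dots> = degree (monom (1::'a) m)"
    using assms by (intro degree_add_eq_left) (simp add: degree_monom_eq)
  finally show ?thesis by (simp add: degree_monom_eq)
qed

lemma Dm_nz: assumes "m \<ge> 2" shows "(Dm m :: 'a poly) \<noteq> 0"
proof
  assume "Dm m = (0 :: 'a poly)"
  hence "degree (Dm m :: 'a poly) = 0" by simp
  with degree_Dm[OF assms] assms show False by simp
qed

lemma nat_dvd_powdiff: "(a - 1) dvd (a ^ s - (1::nat))" if "a \<ge> 1"
proof -
  have "int (a ^ s) - 1 = (int a - 1) * (\<Sum>i<s. int a ^ i)"
    using power_diff_1_eq[of "int a" s] by simp
  hence "int (a - 1) dvd int (a ^ s - 1)"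
    using that by (simp add: of_nat_diff)
  thus ?thesis by (simp only: of_nat_dvd_iff)
qed

lemma monom_X: "monom (1::'a) m = [:0,1:] ^ m"
  by (simp add: monom_altdef)

lemma Dm_dvd: assumes "a \<ge> 1" shows "Dm (a+1) dvd (Dm (a*s+1) :: 'a poly)"
proof -
  define X :: "'a poly" where "X = [:0,1:]"
  have e1: "Dm (a+1) = X * (X^a - 1)" by (simp add: Dm_def monom_X X_def algebra_simps)
  have e2: "Dm (a*s+1) = X * ((X^a)^s - 1)"
    by (simp add: Dm_def monom_X X_def algebra_simps power_mult)
  have "(X^a)^s - 1 = (X^a - 1) * (\<Sum>i<s. (X^a)^i)" by (rule power_diff_1_eq)
  hence "X^a - 1 dvd (X^a)^s - 1" by simp
  thus ?thesis unfolding e1 e2 by (rule mult_dvd_mono[OF dvd_refl])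
qed

lemma card_K: "card (subF q :: 'a set) = q^2"
proof -
  have q2: "q^2 \<ge> (2::nat)"
  proof -
    have "q ^ 1 \<le> q ^ 2" using q_ge2 by (intro power_increasing) auto
    thus ?thesis using q_ge2 by simp
  qed
  have Kr: "(subF q :: 'a set) = {x. poly (Dm (q^2)) x = 0}"
    by (simp add: subF_def poly_Dm)
  have upper: "card (subF q :: 'a set) \<le> q^2"
    unfolding Kr using card_poly_roots_bound[OF Dm_nz[OF q2]] degree_Dm[OF q2] by simp
  obtain s where s: "q^(2*n) - 1 = (q^2 - 1) * s"
    using nat_dvd_powdiff[of "q^2" n] q2 by (auto simp: power_mult elim!: dvdE)
  have Qe: "q^(2*n) = (q^2 - 1) * s + 1" using s Q_ge2 by simp
  have qe: "q^2 = (q^2 - 1) + 1" using q2 by simp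
  have "Dm (q^2) dvd (Dm (q^(2*n)) :: 'a poly)"
    using Dm_dvd[of "q^2 - 1" s] q2 by (subst Qe, subst qe) simp
  then obtain h where h: "(Dm (q^(2*n)) :: 'a poly) = Dm (q^2) * h" by (elim dvdE)
  have hnz: "h \<noteq> 0" using h Dm_nz[OF Q_ge2] by auto
  have dg: "q^(2*n) = q^2 + degree h"
    using h degree_Dm[OF Q_ge2] degree_Dm[OF q2] degree_mult_eq[OF Dm_nz[OF q2] hnz] by simp
  have "UNIV \<subseteq> {x. poly (Dm (q^2)) x = (0::'a)} \<union> {x. poly h x = 0}"
  proof
    fix x :: 'a
    have "poly (Dm (q^(2*n))) x = 0" using pow_Q[of x] by (simp add: poly_Dm)
    thus "x \<in> {x. poly (Dm (q^2)) x = (0::'a)} \<union> {x. poly h x = 0}" by (simp add: h)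
  qed
  hence "card (UNIV :: 'a set) \<le> card ({x. poly (Dm (q^2)) x = (0::'a)} \<union> {x. poly h x = 0})"
    by (intro card_mono) auto
  also have "\<dots> \<le> card {x. poly (Dm (q^2)) x = (0::'a)} + card {x. poly h x = 0}"
    by (rule card_Un_le)
  also have "card {x. poly h x = (0::'a)} \<le> degree h" by (rule card_poly_roots_bound[OF hnz])
  finally have "q^2 \<le> card (subF q :: 'a set)" using cardF dg Kr by simp
  with upper show ?thesis by simp
qed

lemma exists_nonfixed: "\<exists>c\<in>subF q. (c::'a) ^ q \<noteq> c"
proof (rule ccontr)
  assume "\<not> ?thesis"
  hence "subF q \<subseteq> {x. poly (Dm q) x = (0::'a)}" by (auto simp: poly_Dm)
  hence "card (subF q :: 'a set) \<le> card {x. poly (Dm q) x = (0::'a)}" by (intro card_mono) auto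
  also have "\<dots> \<le> q" using card_poly_roots_bound[OF Dm_nz[OF q_ge2]] degree_Dm[OF q_ge2] by simp
  finally have "q^2 \<le> q" using card_K by simp
  with q_ge2 show False by (simp add: power2_eq_square)
qed

lemma sesq_zero_left: assumes "sesquilinear q \<sigma>" shows "\<sigma> 0 v = (0::'a)"
proof -
  have "\<sigma> (0+0) v = \<sigma> 0 v + \<sigma> 0 v" using assms unfolding sesquilinear_def by blast
  thus ?thesis by (simp only: add_0_left add_cancel_right_right)
qed
lemma sesq_zero_right: assumes "sesquilinear q \<sigma>" shows "\<sigma> u 0 = (0::'a)"
proof -
  have "\<sigma> u (0+0) = \<sigma> u 0 + \<sigma> u 0" using assms unfolding sesquilinear_def by blast
  thus ?thesis by (simp only: add_0_left add_cancel_right_right)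
qed

lemma sesq_alt_zero:
  assumes S: "sesquilinear q (\<sigma> :: 'a \<Rightarrow> 'a \<Rightarrow> 'a)" and A: "alternating \<sigma>"
  shows "\<sigma> = (\<lambda>u v. 0)"
proof (intro ext)
  fix u v :: 'a
  have sa1: "\<And>x y z. \<sigma> (x + y) z = \<sigma> x z + \<sigma> y z" using S unfolding sesquilinear_def by blast
  have sa2: "\<And>x y z. \<sigma> x (y + z) = \<sigma> x y + \<sigma> x z" using S unfolding sesquilinear_def by blast
  have sc: "\<And>a x y. a \<in> subF q \<Longrightarrow> \<sigma> (a*x) y = a * \<sigma> x y"
    using S unfolding sesquilinear_def by blast
  have sc2: "\<And>a x y. a \<in> subF q \<Longrightarrow> \<sigma> x (a*y) = a ^ q * \<sigma> x y"
    using S unfolding sesquilinear_def by blast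
  have al: "\<And>x. \<sigma> x x = 0" using A unfolding alternating_def by blast
  have skew: "\<sigma> y x = - \<sigma> x y" for x y
  proof -
    have "0 = \<sigma> (x + y) (x + y)" using al by simp
    also have "\<dots> = \<sigma> x x + \<sigma> y x + (\<sigma> x y + \<sigma> y y)"
      by (simp only: sa1 sa2)
    also have "\<dots> = \<sigma> y x + \<sigma> x y" by (simp only: al add_0_left add_0_right)
    finally have "\<sigma> y x + \<sigma> x y = 0" by simp
    thus ?thesis by (simp add: add_eq_0_iff)
  qed
  obtain c :: 'a where c: "c \<in> subF q" "c ^ q \<noteq> c" using exists_nonfixed by blast
  have "c * \<sigma> u v = \<sigma> (c * u) v" by (rule sc[OF c(1), symmetric])
  also have "\<dots> = - \<sigma> v (c * u)" by (rule skew)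
  also have "\<sigma> v (c * u) = c ^ q * \<sigma> v u" by (rule sc2[OF c(1)])
  also have "\<sigma> v u = - \<sigma> u v" by (rule skew)
  finally have "(c - c ^ q) * \<sigma> u v = 0" by (simp add: algebra_simps)
  thus "\<sigma> u v = 0" using c by simp
qed

lemma card_PiE_K: "card (PiE {..<m} (\<lambda>_. subF q :: 'a set)) = q^(2*m)"
  by (simp add: card_PiE card_K power_mult)

lemma finite_K: "finite (subF q :: 'a set)" by simp

lemma basis_exists:
  "m \<le> n \<Longrightarrow> \<exists>e::nat\<Rightarrow>'a. inj_on (\<lambda>c. \<Sum>i<m. c i * e i) (PiE {..<m} (\<lambda>_. subF q))"
proof (induction m)
  case 0
  show ?case by (auto simp: inj_on_def)
next
  case (Suc m)
  have "m \<le> n" using Suc.prems by simp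
  with Suc.IH obtain e :: "nat \<Rightarrow> 'a" where inj: "inj_on (\<lambda>c. \<Sum>i<m. c i * e i) (PiE {..<m} (\<lambda>_. subF q))"
    by auto
  define V where "V = (\<lambda>c. \<Sum>i<m. c i * e i) ` (PiE {..<m} (\<lambda>_. subF q))"
  have "card V = q^(2*m)" unfolding V_def using card_image[OF inj] card_PiE_K by simp
  also have "\<dots> < q^(2*n)" using Suc.prems q_ge2 by (intro power_strict_increasing) auto
  finally have "card V < card (UNIV :: 'a set)" using cardF by simp
  hence "V \<noteq> UNIV" by auto
  then obtain x where xV: "x \<notin> V" by blast
  define e' where "e' = e(m := x)"
  have sumS: "(\<Sum>i<Suc m. c i * e' i) = (\<Sum>i<m. c i * e i) + c m * x" for c
  proof -
    have "(\<Sum>i<Suc m. c i * e' i) = (\<Sum>i<m. c i * e' i) + c m * e' m" by (rule sum.lessThan_Suc)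
    also have "(\<Sum>i<m. c i * e' i) = (\<Sum>i<m. c i * e i)" by (intro sum.cong refl) (simp add: e'_def)
    also have "e' m = x" by (simp add: e'_def)
    finally show ?thesis .
  qed
  have "inj_on (\<lambda>c. \<Sum>i<Suc m. c i * e' i) (PiE {..<Suc m} (\<lambda>_. subF q))"
  proof (rule inj_onI)
    fix c d assume c: "c \<in> PiE {..<Suc m} (\<lambda>_. subF q)" and d: "d \<in> PiE {..<Suc m} (\<lambda>_. subF q)"
      and eq: "(\<Sum>i<Suc m. c i * e' i) = (\<Sum>i<Suc m. d i * e' i)"
    have cK: "c i \<in> subF q" if "i \<le> m" for i using PiE_mem[OF c, of i] that by simp
    have dK: "d i \<in> subF q" if "i \<le> m" for i using PiE_mem[OF d, of i] that by simp
    from eq have eq2: "(\<Sum>i<m. c i * e i) + c m * x = (\<Sum>i<m. d i * e i) + d m * x"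
      by (simp only: sumS)
    have ck: "c m = d m"
    proof (rule ccontr)
      assume ne: "c m \<noteq> d m"
      have "(c m - d m) * x = (\<Sum>i<m. (d i - c i) * e i)"
        using eq2 by (simp add: algebra_simps sum_subtractf)
      hence "x = (\<Sum>i<m. (d i - c i) * e i) / (c m - d m)"
        using ne by (simp add: field_simps)
      also have "\<dots> = (\<Sum>i<m. ((d i - c i) / (c m - d m)) * e i)"
        by (simp add: sum_divide_distrib)
      also have "\<dots> = (\<Sum>i<m. restrict (\<lambda>i. (d i - c i) / (c m - d m)) {..<m} i * e i)"
        by (intro sum.cong) auto
      finally have "x \<in> V" unfolding V_def
        by (rule image_eqI[where x="restrict (\<lambda>i. (d i - c i) / (c m - d m)) {..<m}"])
          (simp add: restrict_PiE_iff K_divide K_diff cK dK)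
      with xV show False by simp
    qed
    from eq2 ck have "(\<Sum>i<m. c i * e i) = (\<Sum>i<m. d i * e i)" by simp
    hence hs: "(\<Sum>i<m. restrict c {..<m} i * e i) = (\<Sum>i<m. restrict d {..<m} i * e i)" by simp
    have rc: "restrict c {..<m} \<in> PiE {..<m} (\<lambda>_. subF q)" using cK by (simp add: restrict_PiE_iff)
    have rd: "restrict d {..<m} \<in> PiE {..<m} (\<lambda>_. subF q)" using dK by (simp add: restrict_PiE_iff)
    have rr: "restrict c {..<m} = restrict d {..<m}" by (rule inj_onD[OF inj hs rc rd])
    show "c = d"
    proof
      fix i
      consider "i < m" | "i = m" | "i > m" by linarith
      thus "c i = d i"
      proof cases
        case 1 thus ?thesis using fun_cong[OF rr, of i] by simp
      next
        case 2 thus ?thesis using ck by simp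
      next
        case 3
        have "c i = undefined" by (rule PiE_arb[OF c]) (use 3 in simp)
        moreover have "d i = undefined" by (rule PiE_arb[OF d]) (use 3 in simp)
        ultimately show ?thesis by simp
      qed
    qed
  qed
  thus ?case by blast
qed

lemma spanning: "\<exists>e::nat\<Rightarrow>'a. \<forall>x. \<exists>c\<in>PiE {..<n} (\<lambda>_. subF q). x = (\<Sum>i<n. c i * e i)"
proof -
  obtain e :: "nat \<Rightarrow> 'a" where inj: "inj_on (\<lambda>c. \<Sum>i<n. c i * e i) (PiE {..<n} (\<lambda>_. subF q))"
    using basis_exists[OF order_refl] by blast
  have "card ((\<lambda>c. \<Sum>i<n. c i * e i) ` (PiE {..<n} (\<lambda>_. subF q))) = card (UNIV :: 'a set)"
    using card_image[OF inj] card_PiE_K cardF by simp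
  hence "(\<lambda>c. \<Sum>i<n. c i * e i) ` (PiE {..<n} (\<lambda>_. subF q)) = UNIV"
    by (simp add: card_eq_UNIV_imp_eq_UNIV)
  show ?thesis
  proof (intro exI allI)
    fix x :: 'a
    have "x \<in> (\<lambda>c. \<Sum>i<n. c i * e i) ` (PiE {..<n} (\<lambda>_. subF q))" using \<open>_ = UNIV\<close> by simp
    thus "\<exists>c\<in>PiE {..<n} (\<lambda>_. subF q). x = (\<Sum>i<n. c i * e i)" by blast
  qed
qed

lemma sesq_sum_left:
  assumes S: "sesquilinear q \<sigma>" and fin: "finite A"
  shows "\<sigma> (\<Sum>i\<in>A. f i) v = (\<Sum>i\<in>A. \<sigma> (f i) (v::'a))"
  using fin
proof (induction A rule: finite_induct)
  case empty show ?case using sesq_zero_left[OF S] by simp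
next
  case (insert a A)
  have "\<sigma> (f a + sum f A) v = \<sigma> (f a) v + \<sigma> (sum f A) v"
    using S unfolding sesquilinear_def by blast
  thus ?case using insert by simp
qed

lemma sesq_sum_right:
  assumes S: "sesquilinear q \<sigma>" and fin: "finite A"
  shows "\<sigma> u (\<Sum>i\<in>A. f i) = (\<Sum>i\<in>A. \<sigma> (u::'a) (f i))"
  using fin
proof (induction A rule: finite_induct)
  case empty show ?case using sesq_zero_right[OF S] by simp
next
  case (insert a A)
  have "\<sigma> u (f a + sum f A) = \<sigma> u (f a) + \<sigma> u (sum f A)"
    using S unfolding sesquilinear_def by blast
  thus ?case using insert by simp
qed

lemma sesq_expand:
  assumes S: "sesquilinear q (\<sigma> :: 'a \<Rightarrow> 'a \<Rightarrow> 'a)"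
    and c: "c \<in> PiE {..<n} (\<lambda>_. subF q)" and d: "d \<in> PiE {..<n} (\<lambda>_. subF q)"
  shows "\<sigma> (\<Sum>i<n. c i * e i) (\<Sum>j<n. d j * e j) = (\<Sum>i<n. \<Sum>j<n. c i * (d j ^ q * \<sigma> (e i) (e j)))"
proof -
  have sc: "\<And>a u v. a \<in> subF q \<Longrightarrow> \<sigma> (a*u) v = a * \<sigma> u v"
    using S unfolding sesquilinear_def by blast
  have sc2: "\<And>a u v. a \<in> subF q \<Longrightarrow> \<sigma> u (a*v) = a ^ q * \<sigma> u v"
    using S unfolding sesquilinear_def by blast
  have ci: "\<And>i. i < n \<Longrightarrow> c i \<in> subF q" using PiE_mem[OF c] by simp
  have di: "\<And>i. i < n \<Longrightarrow> d i \<in> subF q" using PiE_mem[OF d] by simp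
  have "\<sigma> (\<Sum>i<n. c i * e i) (\<Sum>j<n. d j * e j) = (\<Sum>i<n. \<sigma> (c i * e i) (\<Sum>j<n. d j * e j))"
    by (rule sesq_sum_left[OF S]) simp
  also have "\<dots> = (\<Sum>i<n. c i * \<sigma> (e i) (\<Sum>j<n. d j * e j))"
    by (intro sum.cong refl) (simp add: sc ci)
  also have "\<dots> = (\<Sum>i<n. c i * (\<Sum>j<n. \<sigma> (e i) (d j * e j)))"
    by (simp add: sesq_sum_right[OF S])
  also have "\<dots> = (\<Sum>i<n. c i * (\<Sum>j<n. d j ^ q * \<sigma> (e i) (e j)))"
    by (intro sum.cong refl arg_cong2[where f="(*)"]) (simp add: sc2 di)
  finally show ?thesis by (simp add: sum_distrib_left)
qed

lemma card_sesq: "card {\<sigma> :: 'a \<Rightarrow> 'a \<Rightarrow> 'a. sesquilinear q \<sigma>} \<le> (q^(2*n))^n"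
proof -
  obtain e :: "nat \<Rightarrow> 'a" where sp: "\<forall>x. \<exists>c\<in>PiE {..<n} (\<lambda>_. subF q). x = (\<Sum>i<n. c i * e i)"
    using spanning by blast
  define S where "S = {\<sigma> :: 'a \<Rightarrow> 'a \<Rightarrow> 'a. sesquilinear q \<sigma>}"
  define I where "I = {..<n} \<times> {..<n}"
  define F where "F = (\<lambda>\<sigma> :: 'a \<Rightarrow> 'a \<Rightarrow> 'a. restrict (\<lambda>p. \<sigma> (e (fst p)) (e (snd p))) I)"
  have injF: "inj_on F S"
  proof (rule inj_onI)
    fix \<sigma> \<tau> assume s: "\<sigma> \<in> S" and t: "\<tau> \<in> S" and eq: "F \<sigma> = F \<tau>"
    have ij: "\<sigma> (e i) (e j) = \<tau> (e i) (e j)" if "i < n" "j < n" for i j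
      using fun_cong[OF eq, of "(i,j)"] that by (simp add: F_def I_def)
    show "\<sigma> = \<tau>"
    proof (intro ext)
      fix x y :: 'a
      obtain c where c: "c \<in> PiE {..<n} (\<lambda>_. subF q)" "x = (\<Sum>i<n. c i * e i)" using sp by blast
      obtain d where d: "d \<in> PiE {..<n} (\<lambda>_. subF q)" "y = (\<Sum>i<n. d i * e i)" using sp by blast
      show "\<sigma> x y = \<tau> x y"
        using s t unfolding c(2) d(2) S_def
        by (simp add: sesq_expand[OF _ c(1) d(1)] ij)
    qed
  qed
  have subF: "F ` S \<subseteq> PiE I (\<lambda>_. subF q)"
    by (auto simp: F_def S_def sesquilinear_def)
  have finP: "finite (PiE I (\<lambda>_. subF q :: 'a set))" by (rule finite_PiE) (simp_all add: I_def)
  have "card S = card (F ` S)" by (rule card_image[symmetric]) (rule injF)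
  also have "\<dots> \<le> card (PiE I (\<lambda>_. subF q :: 'a set))" by (rule card_mono[OF finP subF])
  also have "\<dots> = (q^2)^(n*n)" by (simp add: card_PiE I_def card_K card_cartesian_product)
  also have "\<dots> = (q^(2*n))^n" by (simp add: power_mult)
  finally show ?thesis unfolding S_def .
qed

definition Lc :: "(nat \<Rightarrow> 'a) \<Rightarrow> 'a poly" where
  "Lc c = (\<Sum>i<n. monom (c i) (q^(2*i)))"

lemma coeff_Lc: "coeff (Lc c) m = (\<Sum>i<n. if q^(2*i) = m then c i else 0)"
  by (simp add: Lc_def coeff_sum coeff_monom)

lemma q2_Lc: "q2_linear q (Lc c)"
  unfolding q2_linear_def
proof (intro allI impI)
  fix m assume "coeff (Lc c) m \<noteq> 0"
  hence "(\<Sum>i<n. if q^(2*i) = m then c i else 0) \<noteq> 0" by (simp add: coeff_Lc)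
  then obtain i where "i \<in> {..<n}" "(if q^(2*i) = m then c i else 0) \<noteq> 0"
    by (rule sum.not_neutral_contains_not_neutral)
  thus "\<exists>i. m = q^(2*i)" by (auto split: if_splits)
qed

lemma coeff_Lc_j: "j < n \<Longrightarrow> coeff (Lc c) (q^(2*j)) = c j"
proof -
  assume j: "j < n"
  have "coeff (Lc c) (q^(2*j)) = (\<Sum>i<n. if i = j then c i else 0)"
    unfolding coeff_Lc using q_ge2 by (intro sum.cong refl) simp
  thus ?thesis using j by simp
qed

lemma degree_Lc: "degree (Lc c) < q^(2*n)"
proof -
  have "degree (Lc c) \<le> q^(2*(n-1))"
    unfolding Lc_def
  proof (rule degree_sum_le)
    fix i assume "i \<in> {..<n}"
    hence "q^(2*i) \<le> q^(2*(n-1))" using q_ge2 by (intro power_increasing) auto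
    thus "degree (monom (c i) (q^(2*i))) \<le> q^(2*(n-1))" by (rule order_trans[OF degree_monom_le])
  qed simp
  also have "\<dots> < q^(2*n)" using q_ge2 npos by (intro power_strict_increasing) auto
  finally show ?thesis .
qed

lemma sigmaL_diff: "sigmaL q n (L - M) u v = sigmaL q n L u v - sigmaL q n M u (v::'a)"
  by (simp add: sigmaL_def right_diff_distrib trF_diff)

lemma inj_Psi: "inj_on (\<lambda>c. sigmaL q n (Lc c)) (PiE {..<n} (\<lambda>_. UNIV :: 'a set))"
proof (rule inj_onI)
  fix c d :: "nat \<Rightarrow> 'a"
  assume c: "c \<in> PiE {..<n} (\<lambda>_. UNIV)" and d: "d \<in> PiE {..<n} (\<lambda>_. UNIV)"
    and eq: "sigmaL q n (Lc c) = sigmaL q n (Lc d)"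
  have "sigmaL q n (Lc c - Lc d) = (\<lambda>u v. 0)"
    by (intro ext) (simp add: sigmaL_diff eq)
  hence dv: "DQ dvd (Lc c - Lc d)" by (simp add: sigma_zero_iff_dvd)
  have "Lc c - Lc d = 0"
  proof (rule ccontr)
    assume nz: "Lc c - Lc d \<noteq> 0"
    have "degree DQ \<le> degree (Lc c - Lc d)" by (rule dvd_imp_degree_le[OF dv nz])
    moreover have "degree (Lc c - Lc d) < q^(2*n)"
      by (rule degree_diff_less) (rule degree_Lc)+
    ultimately show False by (simp add: degree_DQ)
  qed
  hence LL: "Lc c = Lc d" by simp
  show "c = d"
  proof
    fix j
    show "c j = d j"
    proof (cases "j < n")
      case True
      thus ?thesis using coeff_Lc_j[OF True, of c] coeff_Lc_j[OF True, of d] LL by simp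
    next
      case False
      have "c j = undefined" by (rule PiE_arb[OF c]) (use False in simp)
      moreover have "d j = undefined" by (rule PiE_arb[OF d]) (use False in simp)
      ultimately show ?thesis by simp
    qed
  qed
qed

lemma sesq_surj:
  assumes "sesquilinear q (\<sigma> :: 'a \<Rightarrow> 'a \<Rightarrow> 'a)"
  shows "\<exists>L. q2_linear q L \<and> \<sigma> = sigmaL q n L"
proof -
  define S where "S = {\<sigma> :: 'a \<Rightarrow> 'a \<Rightarrow> 'a. sesquilinear q \<sigma>}"
  define A where "A = PiE {..<n} (\<lambda>_. UNIV :: 'a set)"
  define Psi where "Psi = (\<lambda>c. sigmaL q n (Lc c))"
  have sub: "Psi ` A \<subseteq> S" by (auto simp: Psi_def S_def sesq_sigmaL q2_Lc)
  have "card (Psi ` A) = card A" unfolding Psi_def A_def by (rule card_image[OF inj_Psi])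
  also have "\<dots> = (q^(2*n))^n" by (simp add: A_def card_PiE cardF)
  finally have "card S \<le> card (Psi ` A)" using card_sesq S_def by simp
  hence "Psi ` A = S" by (intro card_seteq[OF _ sub]) simp
  hence "\<sigma> \<in> Psi ` A" using assms S_def by simp
  thus ?thesis unfolding Psi_def using q2_Lc by blast
qed

end

theorem theorem2p1:
  fixes q n :: nat
  assumes "\<exists>p k. prime p \<and> k > 0 \<and> q = p ^ k"
    and "n > 0"
    and "card (UNIV :: 'a::{finite,field} set) = q ^ (2*n)"
  shows "(\<forall>\<sigma> :: 'a \<Rightarrow> 'a \<Rightarrow> 'a. sesquilinear q \<sigma> \<longrightarrow>
            (\<exists>L. q2_linear q L \<and> \<sigma> = sigmaL q n L))
       \<and> (\<forall>L :: 'a poly. q2_linear q L \<longrightarrow>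
            ((alternating (sigmaL q n L) \<longleftrightarrow> sigmaL q n L = (\<lambda>u v. 0)) \<and>
             (sigmaL q n L = (\<lambda>u v. 0) \<longleftrightarrow> (monom 1 (q ^ (2*n)) - monom 1 1) dvd L)))"
proof -
  obtain k where k: "k > 0" "q = CHAR('a) ^ k" using CHAR_is_p[OF assms] by blast
  note ctx = k(2) k(1) assms(2) assms(3)
  show ?thesis
  proof (intro conjI allI impI iffI)
    fix \<sigma> :: "'a \<Rightarrow> 'a \<Rightarrow> 'a" assume "sesquilinear q \<sigma>"
    thus "\<exists>L. q2_linear q L \<and> \<sigma> = sigmaL q n L" by (rule sesq_surj[OF ctx])
  next
    fix L :: "'a poly" assume L: "q2_linear q L" and A: "alternating (sigmaL q n L)"
    show "sigmaL q n L = (\<lambda>u v. 0)" by (rule sesq_alt_zero[OF ctx sesq_sigmaL[OF ctx L] A])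
  next
    fix L :: "'a poly" assume "sigmaL q n L = (\<lambda>u v. 0)"
    thus "alternating (sigmaL q n L)" by (simp add: alternating_def)
  next
    fix L :: "'a poly" assume "sigmaL q n L = (\<lambda>u v. 0)"
    thus "(monom 1 (q ^ (2*n)) - monom 1 1) dvd L"
      using sigma_zero_iff_dvd'[OF ctx] by blast
  next
    fix L :: "'a poly" assume "(monom 1 (q ^ (2*n)) - monom 1 1) dvd L"
    thus "sigmaL q n L = (\<lambda>u v. 0)"
      using sigma_zero_iff_dvd'[OF ctx] by blast
  qed
qed

end
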